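(* Let $\lambda_1\ge\lambda_2\ge\lambda_3>\lambda_4=0$ with $\lambda_1+\lambda_2+\lambda_3=1$, and let $$\rho_{\vec\lambda}=\lambda_1\Phi_1+\lambda_2|01\rangle\langle01|+\lambda_3\Phi_2,\qquad \sigma_{\vec\lambda}=\lambda_1\Phi_1+\lambda_2\Phi_2+\lambda_3\Phi_3.$$ If $2\lambda_1-\lambda_2>1$ and $\lambda_2>\lambda_3$, then there exists no non-entangling map $\Lambda:\mathcal{D}\to\mathcal{D}$ such that $\Lambda(\rho_{\vec\lambda})=\sigma_{\vec\lambda}$.
   Context: $\mathcal{D}$ is the set of two-qubit density matrices on $\mathbb{C}^2\otimes\mathbb{C}^2$ (Hermitian, positive semidefinite, trace one $4\times4$ matrices), written in the computational basis $\{|ij\rangle\}_{i,j\in\{0,1\}}$. The Bell vectors are $|\Phi_1\rangle=\frac{1}{\sqrt2}(|00\rangle+|11\rangle)$, $|\Phi_2\rangle=\frac{1}{\sqrt2}(|00\rangle-|11\rangle)$, $|\Phi_3\rangle=\frac{1}{\sqrt2}(|10\rangle+|01\rangle)$, $|\Phi_4\rangle=\frac{1}{\sqrt2}(|10\rangle-|01\rangle)$, and $\Phi_i=|\Phi_i\rangle\langle\Phi_i|$. A state is separable if it is a convex combination of product states $|\phi\rangle\langle\phi|\otimes|\chi\rangle\langle\chi|$. A map $\Lambda:\mathcal{D}\to\mathcal{D}$ is non-entangling (NE) if it is completely positive and trace preserving and maps every separable state to a separable state. *)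

theory Defs
  imports "Jordan_Normal_Form.Matrix"
begin

text \<open>Two-qubit operators are 4x4 complex matrices (JNF type complex mat) in the
computational basis; the basis vector |ij> has index 2*i + j (i, j in {0,1}).
Vectors are given as functions nat => complex (only indices below the dimension matter).\<close>

definition psd :: "nat \<Rightarrow> complex mat \<Rightarrow> bool" where
  "psd n A \<longleftrightarrow> A \<in> carrier_mat n n
     \<and> (\<forall>i<n. \<forall>j<n. A $$ (i,j) = cnj (A $$ (j,i)))
     \<and> (\<forall>v :: nat \<Rightarrow> complex.
          Im (\<Sum>i<n. \<Sum>j<n. cnj (v i) * A $$ (i,j) * v j) = 0
        \<and> Re (\<Sum>i<n. \<Sum>j<n. cnj (v i) * A $$ (i,j) * v j) \<ge> 0)"

definition tr :: "nat \<Rightarrow> complex mat \<Rightarrow> complex" where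
  "tr n A = (\<Sum>i<n. A $$ (i,i))"

definition density :: "complex mat \<Rightarrow> bool" where
  "density \<rho> \<longleftrightarrow> psd 4 \<rho> \<and> tr 4 \<rho> = 1"

definition proj4 :: "(nat \<Rightarrow> complex) \<Rightarrow> complex mat" where
  "proj4 v = mat 4 4 (\<lambda>(i,j). v i * cnj (v j))"

definition tensor_vec :: "(nat \<Rightarrow> complex) \<Rightarrow> (nat \<Rightarrow> complex) \<Rightarrow> nat \<Rightarrow> complex" where
  "tensor_vec \<phi> \<chi> = (\<lambda>k. \<phi> (k div 2) * \<chi> (k mod 2))"

definition unit2 :: "(nat \<Rightarrow> complex) \<Rightarrow> bool" where
  "unit2 \<phi> \<longleftrightarrow> (cmod (\<phi> 0))\<^sup>2 + (cmod (\<phi> 1))\<^sup>2 = 1"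

text \<open>Product state |phi><phi| (x) |chi><chi| = |phi (x) chi><phi (x) chi|.\<close>
definition product_state :: "(nat \<Rightarrow> complex) \<Rightarrow> (nat \<Rightarrow> complex) \<Rightarrow> complex mat" where
  "product_state \<phi> \<chi> = proj4 (tensor_vec \<phi> \<chi>)"

definition separable :: "complex mat \<Rightarrow> bool" where
  "separable \<rho> \<longleftrightarrow> (\<exists>(m::nat) (p :: nat \<Rightarrow> real) \<phi> \<chi>.
      (\<forall>k<m. p k \<ge> 0 \<and> unit2 (\<phi> k) \<and> unit2 (\<chi> k)) \<and> (\<Sum>k<m. p k) = 1 \<and>
      \<rho> = mat 4 4 (\<lambda>(i,j). \<Sum>k<m. complex_of_real (p k) * product_state (\<phi> k) (\<chi> k) $$ (i,j)))"

definition linear_map4 :: "(complex mat \<Rightarrow> complex mat) \<Rightarrow> bool" where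
  "linear_map4 \<Lambda> \<longleftrightarrow>
     (\<forall>A \<in> carrier_mat 4 4. \<Lambda> A \<in> carrier_mat 4 4) \<and>
     (\<forall>A \<in> carrier_mat 4 4. \<forall>B \<in> carrier_mat 4 4. \<Lambda> (A + B) = \<Lambda> A + \<Lambda> B) \<and>
     (\<forall>A \<in> carrier_mat 4 4. \<forall>c::complex. \<Lambda> (c \<cdot>\<^sub>m A) = c \<cdot>\<^sub>m \<Lambda> A)"

text \<open>(id_n (x) Lambda) applied to a (4n)x(4n) matrix, ancilla index a, system index i
  combined as 4*a + i.\<close>
definition ampliate :: "nat \<Rightarrow> (complex mat \<Rightarrow> complex mat) \<Rightarrow> complex mat \<Rightarrow> complex mat" where
  "ampliate n \<Lambda> M = mat (4*n) (4*n) (\<lambda>(r,c).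
      \<Lambda> (mat 4 4 (\<lambda>(i,j). M $$ (4 * (r div 4) + i, 4 * (c div 4) + j))) $$ (r mod 4, c mod 4))"

definition completely_positive :: "(complex mat \<Rightarrow> complex mat) \<Rightarrow> bool" where
  "completely_positive \<Lambda> \<longleftrightarrow>
     (\<forall>n M. psd (4*n) M \<longrightarrow> psd (4*n) (ampliate n \<Lambda> M))"

definition trace_preserving :: "(complex mat \<Rightarrow> complex mat) \<Rightarrow> bool" where
  "trace_preserving \<Lambda> \<longleftrightarrow> (\<forall>A \<in> carrier_mat 4 4. tr 4 (\<Lambda> A) = tr 4 A)"

definition CPTP :: "(complex mat \<Rightarrow> complex mat) \<Rightarrow> bool" where
  "CPTP \<Lambda> \<longleftrightarrow> linear_map4 \<Lambda> \<and> completely_positive \<Lambda> \<and> trace_preserving \<Lambda>"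

definition non_entangling :: "(complex mat \<Rightarrow> complex mat) \<Rightarrow> bool" where
  "non_entangling \<Lambda> \<longleftrightarrow> CPTP \<Lambda> \<and>
     (\<forall>\<rho>. density \<rho> \<and> separable \<rho> \<longrightarrow> separable (\<Lambda> \<rho>))"

definition Phi1 :: "nat \<Rightarrow> complex" where
  "Phi1 k = (if k = 0 \<or> k = 3 then complex_of_real (1 / sqrt 2) else 0)"
definition Phi2 :: "nat \<Rightarrow> complex" where
  "Phi2 k = (if k = 0 then complex_of_real (1 / sqrt 2)
             else if k = 3 then - complex_of_real (1 / sqrt 2) else 0)"
definition Phi3 :: "nat \<Rightarrow> complex" where
  "Phi3 k = (if k = 2 \<or> k = 1 then complex_of_real (1 / sqrt 2) else 0)"
definition ket01 :: "nat \<Rightarrow> complex" where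
  "ket01 k = (if k = 1 then 1 else 0)"

definition rho_lam :: "real \<Rightarrow> real \<Rightarrow> real \<Rightarrow> complex mat" where
  "rho_lam l1 l2 l3 = complex_of_real l1 \<cdot>\<^sub>m proj4 Phi1 + complex_of_real l2 \<cdot>\<^sub>m proj4 ket01
                      + complex_of_real l3 \<cdot>\<^sub>m proj4 Phi2"

definition sigma_lam :: "real \<Rightarrow> real \<Rightarrow> real \<Rightarrow> complex mat" where
  "sigma_lam l1 l2 l3 = complex_of_real l1 \<cdot>\<^sub>m proj4 Phi1 + complex_of_real l2 \<cdot>\<^sub>m proj4 Phi2
                        + complex_of_real l3 \<cdot>\<^sub>m proj4 Phi3"

end

theory Submission
  imports Defs
begin

definition qf :: "(nat \<Rightarrow> complex) \<Rightarrow> complex mat \<Rightarrow> complex" where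
  "qf v M = (\<Sum>i<4. \<Sum>j<4. cnj (v i) * M $$ (i,j) * v j)"

definition ip :: "(nat \<Rightarrow> complex) \<Rightarrow> (nat \<Rightarrow> complex) \<Rightarrow> complex" where
  "ip v u = (\<Sum>i<4. cnj (v i) * u i)"

lemma sum4: "(\<Sum>i<(4::nat). f i) = f 0 + f 1 + f 2 + f 3"
  by (simp add: eval_nat_numeral)

lemma less4: "(i::nat) < 4 \<longleftrightarrow> i = 0 \<or> i = 1 \<or> i = 2 \<or> i = 3"
  by auto

lemma proj4_carrier[simp]: "proj4 u \<in> carrier_mat 4 4"
  by (simp add: proj4_def)

lemma qf_add: "A \<in> carrier_mat 4 4 \<Longrightarrow> B \<in> carrier_mat 4 4 \<Longrightarrow> qf v (A + B) = qf v A + qf v B"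
  unfolding qf_def by (simp add: sum.distrib[symmetric] ring_distribs)

lemma qf_smult: "A \<in> carrier_mat 4 4 \<Longrightarrow> qf v (c \<cdot>\<^sub>m A) = c * qf v A"
  unfolding qf_def by (simp add: sum_distrib_left mult_ac)

lemma qf_proj: "qf v (proj4 u) = ip v u * cnj (ip v u)"
proof -
  have "qf v (proj4 u) = (\<Sum>i<4. \<Sum>j<4. (cnj (v i) * u i) * cnj (cnj (v j) * u j))"
    unfolding qf_def proj4_def by (intro sum.cong refl) (simp add: mult_ac)
  also have "\<dots> = ip v u * cnj (ip v u)"
    unfolding ip_def cnj_sum sum_product by simp
  finally show ?thesis .
qed

lemma qf_proj_re: "qf v (proj4 u) = complex_of_real ((cmod (ip v u))\<^sup>2)"
  by (simp only: qf_proj complex_norm_square)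

lemma psd_proj4: "psd 4 (proj4 u)"
  unfolding psd_def
proof (intro conjI allI impI)
  show "proj4 u \<in> carrier_mat 4 4" by simp
next
  fix i j :: nat assume "i < 4" "j < 4"
  then show "proj4 u $$ (i, j) = cnj (proj4 u $$ (j, i))" by (simp add: proj4_def)
next
  fix v
  have "(\<Sum>i<4. \<Sum>j<4. cnj (v i) * proj4 u $$ (i, j) * v j) = qf v (proj4 u)" by (simp add: qf_def)
  then show "Im (\<Sum>i<4. \<Sum>j<4. cnj (v i) * proj4 u $$ (i, j) * v j) = 0"
       "0 \<le> Re (\<Sum>i<4. \<Sum>j<4. cnj (v i) * proj4 u $$ (i, j) * v j)"
    by (simp_all add: qf_proj_re)
qed

definition cc :: complex where "cc = complex_of_real (1 / sqrt 2)"
lemma cc_sq: "cc * cc = 1/2"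
  unfolding cc_def by (simp flip: of_real_mult)
   
lemma cc_sq2[simp]: "cc * (cc * x) = x/2"
  by (simp add: mult.assoc[symmetric] cc_sq)
lemma cnj_cc[simp]: "cnj cc = cc" by (simp add: cc_def)

lemma Phi1_cc: "Phi1 k = (if k = 0 \<or> k = 3 then cc else 0)" by (simp add: Phi1_def cc_def)
lemma Phi2_cc: "Phi2 k = (if k = 0 then cc else if k = 3 then - cc else 0)" by (simp add: Phi2_def cc_def)
lemma Phi3_cc: "Phi3 k = (if k = 2 \<or> k = 1 then cc else 0)" by (simp add: Phi3_def cc_def)

definition Phi4 :: "nat \<Rightarrow> complex" where "Phi4 k = (if k = 2 then cc else if k = 1 then - cc else 0)"

lemma bell_sum: "qf Phi1 Y + qf Phi2 Y + qf Phi3 Y + qf Phi4 Y = tr 4 Y"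
  unfolding qf_def tr_def sum4 Phi1_cc Phi2_cc Phi3_cc Phi4_def
  by simp


lemma psd_qf: "psd 4 Y \<Longrightarrow> Re (qf v Y) \<ge> 0 \<and> Im (qf v Y) = 0"
  unfolding psd_def qf_def by blast

lemma sum3: assumes "psd 4 Y"
  shows "Re (qf Phi1 Y) + Re (qf Phi2 Y) + Re (qf Phi3 Y) \<le> Re (tr 4 Y)"
proof -
  have "Re (qf Phi4 Y) \<ge> 0" using psd_qf[OF assms] by blast
  moreover have "Re (qf Phi1 Y) + Re (qf Phi2 Y) + Re (qf Phi3 Y) + Re (qf Phi4 Y) = Re (tr 4 Y)"
    using arg_cong[OF bell_sum[of Y], of Re] by (simp only: plus_complex.sel)
  ultimately show ?thesis by linarith
qed


lemma cs2: "(cmod (a*b + c*d))\<^sup>2 \<le> ((cmod a)\<^sup>2 + (cmod c)\<^sup>2) * ((cmod b)\<^sup>2 + (cmod d)\<^sup>2)"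
proof -
  have "cmod (a*b + c*d) \<le> cmod a * cmod b + cmod c * cmod d"
    by (metis norm_mult norm_triangle_ineq)
  hence "(cmod (a*b + c*d))\<^sup>2 \<le> (cmod a * cmod b + cmod c * cmod d)\<^sup>2"
    by (simp add: power_mono)
  also have "\<dots> \<le> ((cmod a)\<^sup>2 + (cmod c)\<^sup>2) * ((cmod b)\<^sup>2 + (cmod d)\<^sup>2)"
  proof -
    have "0 \<le> (cmod a * cmod d - cmod c * cmod b)\<^sup>2" by simp
    thus ?thesis by (simp add: power2_eq_square algebra_simps)
  qed
  finally show ?thesis .
qed





lemma ip_tensor1: "ip Phi1 (tensor_vec f g) = cc * (f 0 * g 0 + f 1 * g 1)"
  unfolding ip_def sum4 Phi1_cc tensor_vec_def by (simp add: algebra_simps)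
lemma ip_tensor2: "ip Phi2 (tensor_vec f g) = cc * (f 0 * g 0 + (- f 1) * g 1)"
  unfolding ip_def sum4 Phi2_cc tensor_vec_def by (simp add: algebra_simps)
lemma ip_tensor3: "ip Phi3 (tensor_vec f g) = cc * (f 1 * g 0 + f 0 * g 1)"
  unfolding ip_def sum4 Phi3_cc tensor_vec_def by (simp add: algebra_simps)

lemma cmod_cc: "(cmod (cc * z))\<^sup>2 = (cmod z)\<^sup>2 / 2"
proof -
  have "(cmod cc)\<^sup>2 = 1/2" unfolding cc_def norm_of_real by (simp add: power_divide)
  thus ?thesis by (simp add: norm_mult power_mult_distrib)
qed

lemma prod_ip_bound:
  assumes "unit2 f" "unit2 g" "v = Phi1 \<or> v = Phi2 \<or> v = Phi3"
  shows "(cmod (ip v (tensor_vec f g)))\<^sup>2 \<le> 1/2"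
proof -
  have f: "(cmod (f 0))\<^sup>2 + (cmod (f 1))\<^sup>2 = 1" and g: "(cmod (g 0))\<^sup>2 + (cmod (g 1))\<^sup>2 = 1"
    using assms unfolding unit2_def by auto
  from assms(3) show ?thesis
  proof (elim disjE)
    assume "v = Phi1" thus ?thesis
      using cs2[of "f 0" "g 0" "f 1" "g 1"] f g by (simp add: ip_tensor1 cmod_cc)
  next
    assume "v = Phi2" thus ?thesis
      using cs2[of "f 0" "g 0" "- f 1" "g 1"] f g by (simp add: ip_tensor2 cmod_cc)
  next
    assume "v = Phi3" thus ?thesis
      using cs2[of "f 1" "g 0" "f 0" "g 1"] f g by (simp add: ip_tensor3 cmod_cc add.commute)
  qed
qed

lemma qf_mat_sum:
  "qf v (mat 4 4 (\<lambda>(i,j). \<Sum>k<m. complex_of_real (p k) * (P k) $$ (i,j)))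
   = (\<Sum>k<m. complex_of_real (p k) * qf v (P k))"
proof -
  have "qf v (mat 4 4 (\<lambda>(i,j). \<Sum>k<m. complex_of_real (p k) * (P k) $$ (i,j)))
     = (\<Sum>i<4. \<Sum>j<4. \<Sum>k<m. cnj (v i) * (complex_of_real (p k) * (P k) $$ (i,j)) * v j)"
    unfolding qf_def by (intro sum.cong refl) (simp add: sum_distrib_left sum_distrib_right)
  also have "\<dots> = (\<Sum>i<4. \<Sum>k<m. \<Sum>j<4. cnj (v i) * (complex_of_real (p k) * (P k) $$ (i,j)) * v j)"
    by (intro sum.cong refl sum.swap)
  also have "\<dots> = (\<Sum>k<m. \<Sum>i<4. \<Sum>j<4. cnj (v i) * (complex_of_real (p k) * (P k) $$ (i,j)) * v j)"
    by (rule sum.swap)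
  also have "\<dots> = (\<Sum>k<m. complex_of_real (p k) * qf v (P k))"
    unfolding qf_def by (intro sum.cong refl) (simp add: sum_distrib_left mult_ac)
  finally show ?thesis .
qed

lemma sep_bound:
  assumes "separable Y" "v = Phi1 \<or> v = Phi2 \<or> v = Phi3"
  shows "Re (qf v Y) \<le> 1/2"
proof -
  obtain m :: nat and p f g where H: "\<forall>k<m. p k \<ge> 0 \<and> unit2 (f k) \<and> unit2 (g k)" "(\<Sum>k<m. p k) = 1"
    and Y: "Y = mat 4 4 (\<lambda>(i,j). \<Sum>k<m. complex_of_real (p k) * product_state (f k) (g k) $$ (i,j))"
    using assms(1) unfolding separable_def by blast
  have "Re (qf v Y) = (\<Sum>k<m. p k * (cmod (ip v (tensor_vec (f k) (g k))))\<^sup>2)"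
    unfolding Y qf_mat_sum product_state_def qf_proj_re by simp
  also have "\<dots> \<le> (\<Sum>k<m. p k * (1/2))"
    by (intro sum_mono mult_left_mono prod_ip_bound assms(2)) (use H in auto)
  also have "\<dots> = 1/2" by (subst sum_distrib_right[symmetric]) (simp add: H(2))
  finally show ?thesis .
qed

lemma sep_nonneg:
  assumes "separable Y"
  shows "Re (qf v Y) \<ge> 0"
proof -
  obtain m :: nat and p f g where H: "\<forall>k<m. p k \<ge> 0 \<and> unit2 (f k) \<and> unit2 (g k)" "(\<Sum>k<m. p k) = 1"
    and Y: "Y = mat 4 4 (\<lambda>(i,j). \<Sum>k<m. complex_of_real (p k) * product_state (f k) (g k) $$ (i,j))"
    using assms(1) unfolding separable_def by blast
  have "Re (qf v Y) = (\<Sum>k<m. p k * (cmod (ip v (tensor_vec (f k) (g k))))\<^sup>2)"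
    unfolding Y qf_mat_sum product_state_def qf_proj_re by simp
  also have "\<dots> \<ge> 0"
    by (intro sum_nonneg mult_nonneg_nonneg) (use H in auto)
  finally show ?thesis .
qed

lemma tr_proj: "tr 4 (proj4 u) = complex_of_real (\<Sum>i<4. (cmod (u i))\<^sup>2)"
  unfolding tr_def proj4_def by (simp del: of_real_power add: of_real_sum complex_norm_square)

lemma tr_proj_tensor:
  assumes "unit2 f" "unit2 g"
  shows "tr 4 (proj4 (tensor_vec f g)) = 1"
proof -
  have f: "(cmod (f 0))\<^sup>2 + (cmod (f 1))\<^sup>2 = 1" and g: "(cmod (g 0))\<^sup>2 + (cmod (g 1))\<^sup>2 = 1"
    using assms unfolding unit2_def by auto
  have "(\<Sum>i<4. (cmod (tensor_vec f g i))\<^sup>2) = ((cmod (f 0))\<^sup>2 + (cmod (f 1))\<^sup>2) * ((cmod (g 0))\<^sup>2 + (cmod (g 1))\<^sup>2)"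
    unfolding sum4 tensor_vec_def by (simp add: norm_mult power_mult_distrib algebra_simps)
  thus ?thesis using f g by (simp add: tr_proj)
qed

lemma product_density_sep:
  assumes "unit2 f" "unit2 g"
  shows "density (product_state f g) \<and> separable (product_state f g)"
proof
  show "density (product_state f g)"
    unfolding density_def product_state_def using psd_proj4 tr_proj_tensor[OF assms] by simp
  show "separable (product_state f g)"
    unfolding separable_def
    apply (rule exI[of _ 1], rule exI[of _ "\<lambda>_. 1"], rule exI[of _ "\<lambda>_. f"], rule exI[of _ "\<lambda>_. g"])
    using assms by (auto intro!: eq_matI simp: product_state_def proj4_def)
qed


lemma ampliate1:
  assumes "X \<in> carrier_mat 4 4" "\<Lambda> X \<in> carrier_mat 4 4"
  shows "ampliate 1 \<Lambda> X = \<Lambda> X"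
proof -
  have inner: "mat 4 4 (\<lambda>(a,b). X $$ (4 * (i div 4) + a, 4 * (j div 4) + b)) = X"
    if "i < 4" "j < 4" for i j :: nat
    using that assms(1) by (intro eq_matI) auto
  have X': "mat 4 4 (($$) X) = X" using assms(1) by (intro eq_matI) auto
  show ?thesis
    using assms(2) by (intro eq_matI) (auto simp: ampliate_def inner X')
qed

lemma NE_pos:
  assumes "non_entangling \<Lambda>" "psd 4 X"
  shows "psd 4 (\<Lambda> X)"
proof -
  have cp: "completely_positive \<Lambda>" and lin: "linear_map4 \<Lambda>"
    using assms(1) unfolding non_entangling_def CPTP_def by auto
  have X: "X \<in> carrier_mat 4 4" using assms(2) unfolding psd_def by auto
  have LX: "\<Lambda> X \<in> carrier_mat 4 4" using lin X unfolding linear_map4_def by auto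
  have "psd (4*1) X \<longrightarrow> psd (4*1) (ampliate 1 \<Lambda> X)" using cp unfolding completely_positive_def by blast
  hence "psd (4*1) (ampliate 1 \<Lambda> X)" using assms(2) by simp
  thus ?thesis using ampliate1[of X \<Lambda>, OF X LX] by simp
qed

lemma unit2_norm:
  fixes a :: "nat \<Rightarrow> complex"
  assumes "(cmod (a 0))\<^sup>2 + (cmod (a 1))\<^sup>2 = na" "na > 0"
  shows "unit2 (\<lambda>k. a k / complex_of_real (sqrt na))"
proof -
  have "(cmod (a 0 / complex_of_real (sqrt na)))\<^sup>2 + (cmod (a 1 / complex_of_real (sqrt na)))\<^sup>2
        = ((cmod (a 0))\<^sup>2 + (cmod (a 1))\<^sup>2) / na"
    using assms(2) by (simp add: norm_divide power_divide add_divide_distrib)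
  thus ?thesis using assms unfolding unit2_def by simp
qed

lemma proj_scale:
  fixes a b :: "nat \<Rightarrow> complex"
  assumes "na > 0" "nb > 0"
  shows "proj4 (tensor_vec a b) = complex_of_real (na * nb) \<cdot>\<^sub>m
     product_state (\<lambda>k. a k / complex_of_real (sqrt na)) (\<lambda>k. b k / complex_of_real (sqrt nb))"
proof -
  have sa: "complex_of_real (sqrt na) * complex_of_real (sqrt na) = complex_of_real na"
    using assms(1) by (simp flip: of_real_mult)
  have sb: "complex_of_real (sqrt nb) * complex_of_real (sqrt nb) = complex_of_real nb"
    using assms(2) by (simp flip: of_real_mult)
  have na0: "complex_of_real (sqrt na) \<noteq> 0" "complex_of_real (sqrt nb) \<noteq> 0" using assms by auto
  show ?thesis
    unfolding product_state_def proj4_def tensor_vec_def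
    apply (intro eq_matI)
    using assms na0 apply (auto simp: field_simps)
    apply (simp add: sa[symmetric] sb[symmetric] algebra_simps)
    done
qed

lemma NE_prod_bound:
  fixes a b :: "nat \<Rightarrow> complex"
  assumes NE: "non_entangling \<Lambda>"
    and na: "(cmod (a 0))\<^sup>2 + (cmod (a 1))\<^sup>2 = na" "na > 0"
    and nb: "(cmod (b 0))\<^sup>2 + (cmod (b 1))\<^sup>2 = nb" "nb > 0"
    and v: "v = Phi1 \<or> v = Phi2 \<or> v = Phi3"
  shows "Re (qf v (\<Lambda> (proj4 (tensor_vec a b)))) \<le> na * nb / 2"
proof -
  let ?f = "\<lambda>k. a k / complex_of_real (sqrt na)"
  let ?g = "\<lambda>k. b k / complex_of_real (sqrt nb)"
  have lin: "linear_map4 \<Lambda>" using NE unfolding non_entangling_def CPTP_def by auto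
  have uf: "unit2 ?f" by (rule unit2_norm[OF na])
  have ug: "unit2 ?g" by (rule unit2_norm[OF nb])
  have ps: "product_state ?f ?g \<in> carrier_mat 4 4" by (simp add: product_state_def)
  have Lps: "\<Lambda> (product_state ?f ?g) \<in> carrier_mat 4 4" using lin ps unfolding linear_map4_def by auto
  have sep: "separable (\<Lambda> (product_state ?f ?g))"
    using NE product_density_sep[OF uf ug] unfolding non_entangling_def by auto
  have "\<Lambda> (proj4 (tensor_vec a b)) = complex_of_real (na * nb) \<cdot>\<^sub>m \<Lambda> (product_state ?f ?g)"
    using lin ps unfolding proj_scale[OF na(2) nb(2)] linear_map4_def by auto
  hence "Re (qf v (\<Lambda> (proj4 (tensor_vec a b)))) = na * nb * Re (qf v (\<Lambda> (product_state ?f ?g)))"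
    using Lps by (simp add: qf_smult)
  also have "\<dots> \<le> na * nb * (1/2)"
    using sep_bound[OF sep v] na nb by (intro mult_left_mono) auto
  finally show ?thesis by simp
qed

lemma NE_proj_nonneg:
  assumes "non_entangling \<Lambda>"
  shows "Re (qf v (\<Lambda> (proj4 u))) \<ge> 0"
  using psd_qf[OF NE_pos[OF assms psd_proj4]] by blast


definition vec2 :: "complex \<Rightarrow> complex \<Rightarrow> nat \<Rightarrow> complex" where
  "vec2 x y = (\<lambda>k. if k = 0 then x else y)"

lemma vec2_simps[simp]: "vec2 x y 0 = x" "vec2 x y (Suc 0) = y" "vec2 x y 1 = y"
  by (auto simp: vec2_def)

definition "E00 = proj4 (tensor_vec (vec2 1 0) (vec2 1 0))"
definition "E11 = proj4 (tensor_vec (vec2 0 1) (vec2 0 1))"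
definition "E01 = proj4 (tensor_vec (vec2 1 0) (vec2 0 1))"
definition "E10 = proj4 (tensor_vec (vec2 0 1) (vec2 1 0))"
definition "VV \<mu> = proj4 (tensor_vec (vec2 1 \<mu>) (vec2 1 (cnj \<mu>)))"
definition "WW (s::real) \<mu> = proj4 (tensor_vec (vec2 1 (\<mu> * complex_of_real s)) (vec2 (- complex_of_real s) (cnj \<mu>)))"

lemma mat4_eqI:
  assumes "A \<in> carrier_mat 4 4" "B \<in> carrier_mat 4 4"
    "\<And>i j. i \<in> {0,1,2,3} \<Longrightarrow> j \<in> {0,1,2,3} \<Longrightarrow> A $$ (i,j) = B $$ (i,j)"
  shows "A = B"
  using assms by (intro eq_matI) (auto simp: less4)

lemma pow4: "(x::complex)^4 = x * (x * (x * x))" by (simp add: eval_nat_numeral)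

lemma idI1: "E00 + E11 = proj4 Phi1 + proj4 Phi2"
  by (rule mat4_eqI) (auto simp: E00_def E11_def proj4_def tensor_vec_def Phi1_cc Phi2_cc cc_sq)

lemma idI2: "VV 1 + VV \<i> + VV (-1) + VV (-\<i>) = 8 \<cdot>\<^sub>m proj4 Phi1 + 4 \<cdot>\<^sub>m E01 + 4 \<cdot>\<^sub>m E10"
  by (rule mat4_eqI) (auto simp: VV_def E01_def E10_def proj4_def tensor_vec_def Phi1_cc cc_sq)

lemma idI3: "WW s 1 + WW s \<i> + WW s (-1) + WW s (-\<i>) =
   complex_of_real (8 * s\<^sup>2) \<cdot>\<^sub>m proj4 Phi2 + 4 \<cdot>\<^sub>m E01 + complex_of_real (4 * s^4) \<cdot>\<^sub>m E10"
  by (rule mat4_eqI) (auto simp: WW_def E01_def E10_def proj4_def tensor_vec_def Phi2_cc cc_sq power2_eq_square pow4)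

lemma idI4: "rho_lam l1 l2 l3 = complex_of_real l1 \<cdot>\<^sub>m proj4 Phi1 + complex_of_real l2 \<cdot>\<^sub>m E01 + complex_of_real l3 \<cdot>\<^sub>m proj4 Phi2"
  unfolding rho_lam_def
  by (rule mat4_eqI) (auto simp: E01_def proj4_def tensor_vec_def ket01_def)


lemma carriers[simp]: "E00 \<in> carrier_mat 4 4" "E11 \<in> carrier_mat 4 4" "E01 \<in> carrier_mat 4 4"
  "E10 \<in> carrier_mat 4 4" "VV \<mu> \<in> carrier_mat 4 4" "WW s \<mu> \<in> carrier_mat 4 4"
  by (simp_all add: E00_def E11_def E01_def E10_def VV_def WW_def)

lemma ip_bell: "ip Phi1 Phi1 = 1" "ip Phi1 Phi2 = 0" "ip Phi1 Phi3 = 0"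
  "ip Phi2 Phi1 = 0" "ip Phi2 Phi2 = 1" "ip Phi2 Phi3 = 0"
  "ip Phi3 Phi1 = 0" "ip Phi3 Phi2 = 0" "ip Phi3 Phi3 = 1"
  by (simp_all add: ip_def sum4 Phi1_cc Phi2_cc Phi3_cc cc_sq)

lemma sigma_vals: "Re (qf Phi1 (sigma_lam l1 l2 l3)) = l1" "Re (qf Phi2 (sigma_lam l1 l2 l3)) = l2"
  "Re (qf Phi3 (sigma_lam l1 l2 l3)) = l3"
  unfolding sigma_lam_def by (simp_all add: qf_add qf_smult qf_proj ip_bell)

lemma tr_P: "tr 4 (proj4 Phi1) = 1" "tr 4 (proj4 Phi2) = 1"
  by (simp_all add: tr_def proj4_def sum4 Phi1_cc Phi2_cc cc_sq)

lemma LF_add: "linear_map4 \<Lambda> \<Longrightarrow> A \<in> carrier_mat 4 4 \<Longrightarrow> B \<in> carrier_mat 4 4 \<Longrightarrow>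
   qf v (\<Lambda> (A + B)) = qf v (\<Lambda> A) + qf v (\<Lambda> B)"
  unfolding linear_map4_def by (simp add: qf_add)

lemma LF_smult: "linear_map4 \<Lambda> \<Longrightarrow> A \<in> carrier_mat 4 4 \<Longrightarrow>
   qf v (\<Lambda> (c \<cdot>\<^sub>m A)) = c * qf v (\<Lambda> A)"
  unfolding linear_map4_def by (simp add: qf_smult)

lemma cmod_unit: "cmod (\<mu>::complex) = 1 \<Longrightarrow> (cmod (\<mu> * complex_of_real s))\<^sup>2 = s\<^sup>2"
  by (simp add: norm_mult)


lemma arith_core:
  fixes l1 l2 l3 s u1 u2 v1 v2 w1 w2 e00 e11 e01 e10 f01 f10 g01 :: real
  assumes l: "l3 > 0" "l2 > l3" "l1 - l3 - 2*l2 > 0"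
  and s: "l3 * s\<^sup>2 = l2 - l3" "s > 0"
  and a1: "e00 \<le> 1/2" "e11 \<le> 1/2" "e00 + e11 = u1 + u2"
  and a2: "8*u1 + 4*e01 + 4*e10 \<le> 8"
  and a3: "e10 \<ge> 0" "u2 \<ge> 0" "v1 \<ge> 0" "w1 \<ge> 0" "f10 \<ge> 0"
  and a4: "u1 + v1 + w1 \<le> 1" "u2 + v2 + w2 \<le> 1"
  and a5: "l1*u1 + l2*e01 + l3*u2 = l1" "l1*v1 + l2*f01 + l3*v2 = l2" "l1*w1 + l2*g01 + l3*w2 = l3"
  and a6: "f01 \<le> 1/2" "g01 \<le> 1/2"
  and a7: "8*s\<^sup>2*v2 + 4*f01 + 4*s^4*f10 \<le> 4*((1+s\<^sup>2)*(1+s\<^sup>2)/2)"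
  shows False
proof -
  define d where "d = 1 - u1"
  have d0: "d \<ge> 0" using a1 a3 unfolding d_def by linarith
  have h1: "l2*e01 \<le> l2*(2*d)"
    using a2 a3 l by (intro mult_left_mono) (auto simp: d_def)
  have h2: "l3*u2 \<le> l3*d" using a1 a3 l by (intro mult_left_mono) (auto simp: d_def)
  have h5: "l2*e01 = l1*d - l3*u2" using a5(1) unfolding d_def by (simp add: algebra_simps)
  have h3': "(l1 - l3 - 2*l2)*d = l1*d - l3*d - l2*(2*d)" by (simp add: algebra_simps)
  have h3: "(l1 - l3 - 2*l2)*d \<le> 0"
    using h1 h2 h5 h3' by linarith
  have "d \<le> 0"
  proof (rule ccontr)
    assume "\<not> d \<le> 0"
    hence "(l1 - l3 - 2*l2)*d > 0" using l(3) by simp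
    thus False using h3 by simp
  qed
  hence u1: "u1 \<ge> 1" unfolding d_def by simp
  have v1: "v1 = 0" "w1 = 0" using u1 a3 a4 by linarith+
  have b2: "l2*f01 + l3*v2 = l2" "l2*g01 + l3*w2 = l3" using a5 v1 by simp_all
  have "v2 + w2 \<le> 1" using a3 a4 by linarith
  hence "l3*(v2 + w2) \<le> l3*1" using l by (intro mult_left_mono) auto
  hence "l2*(f01 + g01) \<ge> l2 * 1" using b2 by (simp add: distrib_left)
  hence "f01 + g01 \<ge> 1" using l by (simp add: mult_le_cancel_left_pos)
  hence f01: "f01 \<ge> 1/2" using a6 by linarith
  have "l2*f01 \<le> l2*(1/2)" using a6 l by (intro mult_left_mono) auto
  hence lv: "l3*v2 \<ge> l2/2" using b2 by simp
  have "8*s\<^sup>2*v2 + 2 \<le> 2 + 4*s\<^sup>2 + 2*s^4"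
  proof -
    have "4*s^4*f10 \<ge> 0" using a3 by simp
    moreover have "4*((1+s\<^sup>2)*(1+s\<^sup>2)/2) = 2 + 4*s\<^sup>2 + 2*s^4" by (simp add: algebra_simps power2_eq_square power4_eq_xxxx)
    ultimately show ?thesis using a7 f01 by linarith
  qed
  moreover have "s\<^sup>2 * (8*v2) = 8*s\<^sup>2*v2" by simp
  moreover have "s\<^sup>2 * (4 + 2*s\<^sup>2) = 4*s\<^sup>2 + 2*s^4" by (simp add: algebra_simps power2_eq_square power4_eq_xxxx)
  ultimately have "s\<^sup>2 * (8*v2) \<le> s\<^sup>2 * (4 + 2*s\<^sup>2)" by linarith
  hence "8*v2 \<le> 4 + 2*s\<^sup>2" using s(2) by (simp add: mult_le_cancel_left)
  hence "l3*(8*v2) \<le> l3*(4 + 2*s\<^sup>2)" using l by (intro mult_left_mono) auto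
  hence "8*(l3*v2) \<le> 4*l3 + 2*(l3*s\<^sup>2)" by (simp add: algebra_simps)
  thus False using lv s(1) l by linarith
qed

theorem theorem5:
  fixes l1 l2 l3 :: real
  assumes "l1 \<ge> l2" and "l2 \<ge> l3" and "l3 > 0" and "l1 + l2 + l3 = 1"
    and "2 * l1 - l2 > 1" and "l2 > l3"
  shows "\<not> (\<exists>\<Lambda>. non_entangling \<Lambda> \<and> \<Lambda> (rho_lam l1 l2 l3) = sigma_lam l1 l2 l3)"
proof
  assume "\<exists>\<Lambda>. non_entangling \<Lambda> \<and> \<Lambda> (rho_lam l1 l2 l3) = sigma_lam l1 l2 l3"
  then obtain \<Lambda> where NE: "non_entangling \<Lambda>" and eq: "\<Lambda> (rho_lam l1 l2 l3) = sigma_lam l1 l2 l3"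
    by blast
  have lin: "linear_map4 \<Lambda>" and TP: "trace_preserving \<Lambda>"
    using NE unfolding non_entangling_def CPTP_def by auto
  define F where "F M v = Re (qf v (\<Lambda> M))" for M v
  define s where "s = sqrt ((l2 - l3) / l3)"
  have s2: "l3 * s\<^sup>2 = l2 - l3" using assms unfolding s_def by simp
  have spos: "s > 0" using assms unfolding s_def by simp
  have Fadd: "F (A + B) v = F A v + F B v" if "A \<in> carrier_mat 4 4" "B \<in> carrier_mat 4 4" for A B v
    unfolding F_def using LF_add[OF lin that] by simp
  have Fsm: "F (c \<cdot>\<^sub>m A) v = Re (c * qf v (\<Lambda> A))" if "A \<in> carrier_mat 4 4" for A c v
    unfolding F_def using LF_smult[OF lin that] by simp
  have v123: "Phi1 = Phi1 \<or> Phi1 = Phi2 \<or> Phi1 = Phi3" "Phi2 = Phi1 \<or> Phi2 = Phi2 \<or> Phi2 = Phi3"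
     "Phi3 = Phi1 \<or> Phi3 = Phi2 \<or> Phi3 = Phi3" by simp_all
  have e00: "F E00 Phi1 \<le> 1/2"
    using NE_prod_bound[OF NE _ _ _ _ v123(1), of "vec2 1 0" 1 "vec2 1 0" 1] unfolding F_def E00_def by simp
  have e11: "F E11 Phi1 \<le> 1/2"
    using NE_prod_bound[OF NE _ _ _ _ v123(1), of "vec2 0 1" 1 "vec2 0 1" 1] unfolding F_def E11_def by simp
  have f01: "F E01 Phi2 \<le> 1/2"
    using NE_prod_bound[OF NE _ _ _ _ v123(2), of "vec2 1 0" 1 "vec2 0 1" 1] unfolding F_def E01_def by simp
  have g01: "F E01 Phi3 \<le> 1/2"
    using NE_prod_bound[OF NE _ _ _ _ v123(3), of "vec2 1 0" 1 "vec2 0 1" 1] unfolding F_def E01_def by simp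
  have Vb: "F (VV \<mu>) Phi1 \<le> 2" if "cmod \<mu> = 1" for \<mu>
    using NE_prod_bound[OF NE _ _ _ _ v123(1), of "vec2 1 \<mu>" 2 "vec2 1 (cnj \<mu>)" 2] that
    unfolding F_def VV_def by simp
  have sp1: "0 < 1 + s\<^sup>2" by (smt (verit) zero_le_power2)
  have Wb: "F (WW s \<mu>) Phi2 \<le> (1 + s\<^sup>2) * (1 + s\<^sup>2) / 2" if "cmod \<mu> = 1" for \<mu>
    using NE_prod_bound[OF NE _ _ _ _ v123(2), of "vec2 1 (\<mu> * complex_of_real s)" "1 + s\<^sup>2"
       "vec2 (- complex_of_real s) (cnj \<mu>)" "1 + s\<^sup>2"] that cmod_unit[OF that, of s]
    unfolding F_def WW_def using sp1 by (simp add: add.commute)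
  have cI: "cmod \<i> = 1" "cmod (-\<i>) = 1" "cmod (1::complex) = 1" "cmod (-1::complex) = 1" by simp_all
  have nn: "F (proj4 u) v \<ge> 0" for u v unfolding F_def by (rule NE_proj_nonneg[OF NE])
  have Vsum: "F (VV 1 + VV \<i> + VV (-1) + VV (-\<i>)) Phi1 = F (VV 1) Phi1 + F (VV \<i>) Phi1 + F (VV (-1)) Phi1 + F (VV (-\<i>)) Phi1"
    by (simp add: Fadd)
  also have "\<dots> \<le> 8" using Vb[OF cI(1)] Vb[OF cI(2)] Vb[OF cI(3)] Vb[OF cI(4)] by linarith
  finally have A2: "8 * F (proj4 Phi1) Phi1 + 4 * F E01 Phi1 + 4 * F E10 Phi1 \<le> 8"
    unfolding idI2 by (simp add: Fadd Fsm) (simp add: F_def)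
  have "F (WW s 1 + WW s \<i> + WW s (-1) + WW s (-\<i>)) Phi2 = F (WW s 1) Phi2 + F (WW s \<i>) Phi2 + F (WW s (-1)) Phi2 + F (WW s (-\<i>)) Phi2"
    by (simp add: Fadd)
  also have "\<dots> \<le> 4 * ((1 + s\<^sup>2) * (1 + s\<^sup>2) / 2)" using Wb[OF cI(1)] Wb[OF cI(2)] Wb[OF cI(3)] Wb[OF cI(4)] by linarith
  finally have A7: "8 * s\<^sup>2 * F (proj4 Phi2) Phi2 + 4 * F E01 Phi2 + 4 * s^4 * F E10 Phi2 \<le> 4 * ((1 + s\<^sup>2) * (1 + s\<^sup>2) / 2)"
    unfolding idI3 by (simp add: Fadd Fsm) (simp add: F_def)
  have A1: "F E00 Phi1 + F E11 Phi1 = F (proj4 Phi1) Phi1 + F (proj4 Phi2) Phi1"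
    using arg_cong[OF idI1, of "\<lambda>M. F M Phi1"] by (simp add: Fadd)
  have rv: "l1 * F (proj4 Phi1) v + l2 * F E01 v + l3 * F (proj4 Phi2) v = Re (qf v (sigma_lam l1 l2 l3))" for v
  proof -
    have "F (rho_lam l1 l2 l3) v = l1 * F (proj4 Phi1) v + l2 * F E01 v + l3 * F (proj4 Phi2) v"
      unfolding idI4 by (simp add: Fadd Fsm) (simp add: F_def)
    moreover have "F (rho_lam l1 l2 l3) v = Re (qf v (sigma_lam l1 l2 l3))" unfolding F_def eq ..
    ultimately show ?thesis by simp
  qed
  have trs: "F (proj4 Phi1) Phi1 + F (proj4 Phi1) Phi2 + F (proj4 Phi1) Phi3 \<le> 1"
            "F (proj4 Phi2) Phi1 + F (proj4 Phi2) Phi2 + F (proj4 Phi2) Phi3 \<le> 1"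
  proof -
    have "tr 4 (\<Lambda> (proj4 Phi1)) = 1" "tr 4 (\<Lambda> (proj4 Phi2)) = 1"
      using TP tr_P unfolding trace_preserving_def by auto
    thus "F (proj4 Phi1) Phi1 + F (proj4 Phi1) Phi2 + F (proj4 Phi1) Phi3 \<le> 1"
            "F (proj4 Phi2) Phi1 + F (proj4 Phi2) Phi2 + F (proj4 Phi2) Phi3 \<le> 1"
      using sum3[OF NE_pos[OF NE psd_proj4[of Phi1]]] sum3[OF NE_pos[OF NE psd_proj4[of Phi2]]]
      unfolding F_def by auto
  qed
  have E10n: "F E10 Phi1 \<ge> 0" "F E10 Phi2 \<ge> 0" unfolding E10_def by (rule nn)+
  have l: "l3 > 0" "l2 > l3" "l1 - l3 - 2*l2 > 0" using assms by linarith+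
  have rv1: "l1 * F (proj4 Phi1) Phi1 + l2 * F E01 Phi1 + l3 * F (proj4 Phi2) Phi1 = l1"
    using rv[of Phi1] unfolding sigma_vals .
  have rv2: "l1 * F (proj4 Phi1) Phi2 + l2 * F E01 Phi2 + l3 * F (proj4 Phi2) Phi2 = l2"
    using rv[of Phi2] unfolding sigma_vals .
  have rv3: "l1 * F (proj4 Phi1) Phi3 + l2 * F E01 Phi3 + l3 * F (proj4 Phi2) Phi3 = l3"
    using rv[of Phi3] unfolding sigma_vals .
  show False
    by (rule arith_core[OF l s2 spos e00 e11 A1 A2 E10n(1) nn[of Phi2 Phi1] nn[of Phi1 Phi2]
        nn[of Phi1 Phi3] E10n(2) trs rv1 rv2 rv3 f01 g01 A7])
qed

end
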